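(* Let $\mathscr Q_n$ be a non-singular quadric in $\mathrm{PG}(n,2)$ of projective index $g\geq 1$, with point-graph $\Gamma$. For each integer $s$ with $0\leq s<g$, let $\Gamma_s$ be the graph obtained from $\Gamma$ by the Godsil–McKay switching with respect to the partition $\{\mathcal X_s,\mathcal Y_s\}$ (defined below). Then $\{\mathcal X_s,\mathcal Y_s\}$ is a Godsil–McKay partition of $\Gamma$, and $\Gamma_s$ is a strongly regular graph with the same parameters as $\Gamma$.
   Context: A non-singular quadric $\mathscr Q_n$ in $\mathrm{PG}(n,q)$ is the point set of a non-degenerate quadric. Its projective index $g$ is the largest dimension of a projective subspace contained in $\mathscr Q_n$; the $g$-dimensional subspaces contained in $\mathscr Q_n$ are its generators. If $n=2r$, $\mathscr Q_n$ is the parabolic quadric $\mathcal P_{2r}$ with $g=r-1$; if $n=2r+1$, it is either the elliptic quadric $\mathcal E_{2r+1}$ with $g=r-1$ or the hyperbolic quadric $\mathcal H_{2r+1}$ with $g=r$. The point-graph $\Gamma$ of $\mathscr Q_n$ has vertex set the points of $\mathscr Q_n$, two distinct points being adjacent iff the line joining them is contained in $\mathscr Q_n$. Fix an integer $s$ with $0\le s<g$ and an $s$-dimensional subspace $\alpha_s$ contained in $\mathscr Q_n$. A point $X$ of $\mathscr Q_n$ has type (i) if $X\in\alpha_s$; type (ii) if $X\notin\alpha_s$ and the $(s+1)$-space $\langle \alpha_s,X\rangle$ is contained in $\mathscr Q_n$; type (iii) otherwise. $\mathcal X_s$ is the set of type (ii) points, $\mathcal Y_s$ the set of points of type (i) or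 (iii). A Godsil–McKay partition of a graph is a partition $\{\mathcal X,\mathcal Y\}$ of its vertices such that $\mathcal X$ induces a regular subgraph and each vertex of $\mathcal Y$ is adjacent to $0$, $\frac12|\mathcal X|$ or $|\mathcal X|$ vertices of $\mathcal X$. The graph $\Gamma_s$ has the same vertex set as $\Gamma$ and the same edges, except that for each vertex $R\in\mathcal Y_s$ having exactly $\frac12|\mathcal X_s|$ neighbours in $\mathcal X_s$ (in $\Gamma$), those edges are deleted and $R$ is joined instead to the other $\frac12|\mathcal X_s|$ vertices of $\mathcal X_s$. *)

theory Defs
  imports "HOL-Analysis.Analysis" "HOL-Library.Z2"
begin

text \<open>The underlying vector space of PG(n,2) is bit^'n with CARD('n) = n+1,
  bit = GF(2). Since the only nonzero scalar is 1, projective points of PG(n,2)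
  are exactly the nonzero vectors; a projective d-space is the set of nonzero
  vectors of a linear subspace of (vector-space) dimension d+1.\<close>

definition polar :: "(bit^'n \<Rightarrow> bit) \<Rightarrow> bit^'n \<Rightarrow> bit^'n \<Rightarrow> bit" where
  "polar Q x y = Q (x + y) - Q x - Q y"

definition quadratic_form :: "(bit^'n \<Rightarrow> bit) \<Rightarrow> bool" where
  "quadratic_form Q \<longleftrightarrow>
     (\<forall>c x. Q (c *s x) = c^2 * Q x) \<and>
     (\<forall>x y z. polar Q (x + y) z = polar Q x z + polar Q y z) \<and>
     (\<forall>c x z. polar Q (c *s x) z = c * polar Q x z) \<and>
     (\<forall>x y. polar Q x y = polar Q y x)"

definition nonsingular_quadric :: "(bit^'n \<Rightarrow> bit) \<Rightarrow> bool" where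
  "nonsingular_quadric Q \<longleftrightarrow> quadratic_form Q \<and>
     \<not> (\<exists>x. x \<noteq> 0 \<and> Q x = 0 \<and> (\<forall>y. polar Q x y = 0))"

definition qpoints :: "(bit^'n \<Rightarrow> bit) \<Rightarrow> (bit^'n) set" where
  "qpoints Q = {x. x \<noteq> 0 \<and> Q x = 0}"

definition on_quadric :: "(bit^'n \<Rightarrow> bit) \<Rightarrow> (bit^'n) set \<Rightarrow> bool" where
  "on_quadric Q W \<longleftrightarrow> (\<forall>v\<in>W. v \<noteq> 0 \<longrightarrow> Q v = 0)"

definition quadric_subspace :: "(bit^'n \<Rightarrow> bit) \<Rightarrow> nat \<Rightarrow> (bit^'n) set \<Rightarrow> bool" where
  "quadric_subspace Q d W \<longleftrightarrow> vec.subspace W \<and> vec.dim W = d + 1 \<and> on_quadric Q W"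

definition projective_index :: "(bit^'n \<Rightarrow> bit) \<Rightarrow> nat \<Rightarrow> bool" where
  "projective_index Q g \<longleftrightarrow> (\<exists>W. quadric_subspace Q g W) \<and>
     (\<forall>d W. quadric_subspace Q d W \<longrightarrow> d \<le> g)"

definition qadj :: "(bit^'n \<Rightarrow> bit) \<Rightarrow> bit^'n \<Rightarrow> bit^'n \<Rightarrow> bool" where
  "qadj Q x y \<longleftrightarrow> x \<noteq> y \<and> on_quadric Q (vec.span {x, y})"

text \<open>Type (ii) points w.r.t. the linear subspace A underlying alpha_s.\<close>
definition Xset :: "(bit^'n \<Rightarrow> bit) \<Rightarrow> (bit^'n) set \<Rightarrow> (bit^'n) set" where
  "Xset Q A = {x \<in> qpoints Q. x \<notin> A \<and> on_quadric Q (vec.span (insert x A))}"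

definition Yset :: "(bit^'n \<Rightarrow> bit) \<Rightarrow> (bit^'n) set \<Rightarrow> (bit^'n) set" where
  "Yset Q A = qpoints Q - Xset Q A"

definition nbrs :: "'a set \<Rightarrow> ('a \<Rightarrow> 'a \<Rightarrow> bool) \<Rightarrow> 'a \<Rightarrow> 'a set" where
  "nbrs S E x = {y \<in> S. E x y}"

definition godsil_mckay_partition ::
  "'a set \<Rightarrow> ('a \<Rightarrow> 'a \<Rightarrow> bool) \<Rightarrow> 'a set \<Rightarrow> 'a set \<Rightarrow> bool" where
  "godsil_mckay_partition V E X Y \<longleftrightarrow>
     X \<noteq> {} \<and> Y \<noteq> {} \<and> X \<union> Y = V \<and> X \<inter> Y = {} \<and>
     (\<exists>k. \<forall>x\<in>X. card (nbrs X E x) = k) \<and>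
     (\<forall>y\<in>Y. card (nbrs X E y) = 0 \<or> 2 * card (nbrs X E y) = card X
              \<or> card (nbrs X E y) = card X)"

definition gm_switch ::
  "'a set \<Rightarrow> ('a \<Rightarrow> 'a \<Rightarrow> bool) \<Rightarrow> 'a set \<Rightarrow> 'a set \<Rightarrow> 'a \<Rightarrow> 'a \<Rightarrow> bool" where
  "gm_switch V E X Y x y =
     (if (x \<in> Y \<and> y \<in> X \<and> 2 * card (nbrs X E x) = card X) \<or>
         (y \<in> Y \<and> x \<in> X \<and> 2 * card (nbrs X E y) = card X)
      then \<not> E x y else E x y)"

definition strongly_regular ::
  "'a set \<Rightarrow> ('a \<Rightarrow> 'a \<Rightarrow> bool) \<Rightarrow> nat \<Rightarrow> nat \<Rightarrow> nat \<Rightarrow> nat \<Rightarrow> bool" where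
  "strongly_regular V E v k l m \<longleftrightarrow>
     finite V \<and> card V = v \<and>
     (\<forall>x\<in>V. \<not> E x x) \<and> (\<forall>x\<in>V. \<forall>y\<in>V. E x y \<longrightarrow> E y x) \<and>
     (\<forall>x\<in>V. card (nbrs V E x) = k) \<and>
     (\<forall>x\<in>V. \<forall>y\<in>V. x \<noteq> y \<and> E x y \<longrightarrow> card (nbrs V E x \<inter> nbrs V E y) = l) \<and>
     (\<forall>x\<in>V. \<forall>y\<in>V. x \<noteq> y \<and> \<not> E x y \<longrightarrow> card (nbrs V E x \<inter> nbrs V E y) = m)"

end

theory Submission
  imports Defs
begin


declare add_bit_eq_xor[simp del] mult_bit_eq_and[simp del]

instance bit :: finite
proof
  have "(UNIV :: bit set) = {0, 1}" by (auto intro: bit.exhaust)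
  then show "finite (UNIV :: bit set)" by (metis finite.emptyI finite.insertI)
qed

lemma bit_add_self[simp]: "(x::bit) + x = 0"
  by (cases x) simp_all

lemma vec_add_self[simp]: "(x::bit^'n) + x = 0"
  by (simp add: vec_eq_iff)

lemma vec_add_self2[simp]: "(x::bit^'n) + (x + y) = y"
  by (simp add: add.assoc[symmetric])

lemma vec_add_self3[simp]: "(y::bit^'n) + x + x = y"
  by (simp add: add.assoc)

lemma bit_cases2: "(b::bit) = 0 \<or> b = 1" by (cases b) simp_all

definition chi :: "bit \<Rightarrow> real" where "chi b = (if b = 0 then 1 else -1)"

lemma chi_add: "chi (a + b) = chi a * chi b"
  by (cases a; cases b) (simp_all add: chi_def)

lemma chi_sq: "chi a * chi a = 1" by (simp add: chi_def)

lemma scale_bit: "(c::bit) *s (x::bit^'n) = (if c = 0 then 0 else x)"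
  by (cases c) (simp_all add: vec_eq_iff)

definition grp :: "(bit^'n) set \<Rightarrow> bool" where
  "grp D \<longleftrightarrow> 0 \<in> D \<and> (\<forall>a\<in>D. \<forall>b\<in>D. a + b \<in> D)"

lemma grp_subspace: "grp D \<Longrightarrow> vec.subspace D"
  unfolding vec.subspace_def grp_def by (auto simp: scale_bit)

lemma subspace_grp: "vec.subspace D \<Longrightarrow> grp D"
  unfolding grp_def by (simp add: vec.subspace_0 vec.subspace_add)

lemma grp_UNIV: "grp UNIV" by (simp add: grp_def)

lemma char_sum_grp:
  fixes D :: "(bit^'n) set" and f :: "bit^'n \<Rightarrow> bit"
  assumes G: "grp D" and add: "\<And>a b. a \<in> D \<Longrightarrow> b \<in> D \<Longrightarrow> f (a + b) = f a + f b"
  shows "(\<Sum>d\<in>D. chi (f d)) = (if \<forall>d\<in>D. f d = 0 then real (card D) else 0)"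
proof (cases "\<forall>d\<in>D. f d = 0")
  case True
  then show ?thesis by (simp add: chi_def)
next
  case False
  then obtain d0 where d0: "d0 \<in> D" "f d0 \<noteq> 0" by blast
  have f1: "f d0 = 1" using d0 by simp
  have img: "(\<lambda>d. d + d0) ` D = D"
  proof
    show "(\<lambda>d. d + d0) ` D \<subseteq> D" using G d0 by (auto simp: grp_def)
    show "D \<subseteq> (\<lambda>d. d + d0) ` D"
    proof
      fix x assume "x \<in> D"
      then have "x + d0 \<in> D" using G d0 by (auto simp: grp_def)
      moreover have "x = (x + d0) + d0" by simp
      ultimately show "x \<in> (\<lambda>d. d + d0) ` D" by blast
    qed
  qed
  have inj: "inj_on (\<lambda>d. d + d0) D" by (rule inj_onI) simp
  have "(\<Sum>d\<in>D. chi (f d)) = (\<Sum>d\<in>(\<lambda>d. d + d0) ` D. chi (f d))" using img by simp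
  also have "\<dots> = (\<Sum>d\<in>D. chi (f (d + d0)))" using sum.reindex[OF inj] by simp
  also have "\<dots> = (\<Sum>d\<in>D. - chi (f d))"
    by (rule sum.cong) (auto simp: add d0 chi_add f1 chi_def)
  finally have "(\<Sum>d\<in>D. chi (f d)) = - (\<Sum>d\<in>D. chi (f d))" by (simp add: sum_negf)
  then have "(\<Sum>d\<in>D. chi (f d)) = 0" by linarith
  then show ?thesis by (subst if_not_P[OF False])
qed

lemma Q0: "quadratic_form Q \<Longrightarrow> Q 0 = 0"
proof -
  assume q: "quadratic_form Q"
  have "Q ((0::bit) *s (0::bit^'a)) = 0^2 * Q 0" using q unfolding quadratic_form_def by blast
  then show ?thesis by (simp add: scale_bit)
qed

lemma polar_sym: "quadratic_form Q \<Longrightarrow> polar Q x y = polar Q y x"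
  unfolding quadratic_form_def by blast

lemma polar_add1: "quadratic_form Q \<Longrightarrow> polar Q (x + y) z = polar Q x z + polar Q y z"
  unfolding quadratic_form_def by blast

lemma polar_add2: "quadratic_form Q \<Longrightarrow> polar Q z (x + y) = polar Q z x + polar Q z y"
  by (metis polar_sym polar_add1)

lemma bit_aux1: "(c::bit) = a + b + (c - a - b)" by (cases a; cases b; cases c) simp_all

lemma Q_add: "Q (x + y) = Q x + Q y + polar Q x y"
  unfolding polar_def by (rule bit_aux1)

lemma polar_self: "quadratic_form Q \<Longrightarrow> polar Q x x = 0"
proof -
  assume q: "quadratic_form Q"
  have "Q (x + x) = 0" using Q0[OF q] by simp
  then show ?thesis unfolding polar_def by (cases "Q x") simp_all
qed

lemma polar_zero1: "quadratic_form Q \<Longrightarrow> polar Q 0 y = 0"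
proof -
  assume q: "quadratic_form Q"
  have "polar Q (0 + 0) y = polar Q 0 y + polar Q 0 y" by (rule polar_add1[OF q])
  then show ?thesis by simp
qed

lemma polar_zero2: "quadratic_form Q \<Longrightarrow> polar Q y 0 = 0"
  using polar_sym polar_zero1 by metis




lemma xor_simps[simp]:
  "(x::bit^'n) + y + x = y" "y + (x + y) = x" "(x + y) + (x + y) = 0"
  by (simp_all add: add.commute add.left_commute add.assoc[symmetric])

lemma vec_eq_add_iff: "(x::bit^'n) + y = 0 \<longleftrightarrow> x = y"
  by (metis vec_add_self vec_add_self2 add_0_right)

lemma grp4: "grp {0, x, y, (x::bit^'n) + y}"
  unfolding grp_def by auto

lemma span2: "vec.span {x, y} = {0, x, y, (x::bit^'n) + y}"
proof
  show "vec.span {x, y} \<subseteq> {0, x, y, x + y}"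
    by (rule vec.span_minimal) (auto intro: grp_subspace grp4)
  show "{0, x, y, x + y} \<subseteq> vec.span {x, y}"
    by (auto intro: vec.span_add vec.span_base vec.span_zero)
qed

definition ext :: "bit^'n \<Rightarrow> (bit^'n) set \<Rightarrow> (bit^'n) set" where
  "ext x A = A \<union> (\<lambda>a. x + a) ` A"

lemma grp_ext:
  fixes x :: "bit^'n"
  assumes G: "grp A"
  shows "grp (ext x A)"
proof -
  have e1: "\<And>a b. (x + a) + (x + b) = a + (b::bit^'n)" by (simp add: add.commute add.left_commute)
  have e2: "\<And>u b. u + (x + b) = x + (u + (b::bit^'n))" by (simp add: add.commute add.left_commute)
  have e3: "\<And>a v. (x + a) + v = x + (a + (v::bit^'n))" by (simp add: add.assoc)
  show ?thesis unfolding grp_def ext_def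
  proof (intro conjI ballI)
    show "0 \<in> A \<union> (+) x ` A" using G unfolding grp_def by blast
    fix u v assume u: "u \<in> A \<union> (+) x ` A" and v: "v \<in> A \<union> (+) x ` A"
    from u show "u + v \<in> A \<union> (+) x ` A"
    proof
      assume uA: "u \<in> A"
      from v show ?thesis
      proof
        assume "v \<in> A" then show ?thesis using uA G unfolding grp_def by blast
      next
        assume "v \<in> (+) x ` A"
        then obtain b where b: "b \<in> A" "v = x + b" by blast
        then have "u + b \<in> A" using uA G unfolding grp_def by blast
        then show ?thesis using b e2 by blast
      qed
    next
      assume "u \<in> (+) x ` A"
      then obtain a where a: "a \<in> A" "u = x + a" by blast
      from v show ?thesis
      proof
        assume vA: "v \<in> A"
        then have "a + v \<in> A" using a G unfolding grp_def by blast
        then show ?thesis using a e3 by blast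
      next
        assume "v \<in> (+) x ` A"
        then obtain b where b: "b \<in> A" "v = x + b" by blast
        then have "a + b \<in> A" using a G unfolding grp_def by blast
        then show ?thesis using a b e1 by auto
      qed
    qed
  qed
qed

lemma span_ext: "vec.subspace A \<Longrightarrow> vec.span (insert x A) = ext x A"
proof
  assume A: "vec.subspace A"
  show "vec.span (insert x A) \<subseteq> ext x A"
  proof (rule vec.span_minimal)
    have "x = x + 0" by simp
    then show "insert x A \<subseteq> ext x A" using vec.subspace_0[OF A] unfolding ext_def by blast
    show "vec.subspace (ext x A)" by (rule grp_subspace[OF grp_ext[OF subspace_grp[OF A]]])
  qed
  show "ext x A \<subseteq> vec.span (insert x A)"
  proof
    fix v assume "v \<in> ext x A"
    then consider "v \<in> A" | a where "a \<in> A" "v = x + a" unfolding ext_def by blast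
    then show "v \<in> vec.span (insert x A)"
    proof cases
      case 1 then show ?thesis by (simp add: vec.span_base)
    next
      case 2
      have "x \<in> vec.span (insert x A)" "a \<in> vec.span (insert x A)"
        using 2 by (simp_all add: vec.span_base)
      then show ?thesis using 2 vec.span_add by blast
    qed
  qed
qed

lemma card_ext: "x \<notin> A \<Longrightarrow> grp A \<Longrightarrow> card (ext x A) = 2 * card A"
proof -
  assume x: "x \<notin> A" and G: "grp A"
  have disj: "A \<inter> (\<lambda>a. x + a) ` A = {}"
  proof (rule ccontr)
    assume "A \<inter> (\<lambda>a. x + a) ` A \<noteq> {}"
    then obtain a b where "a \<in> A" "b \<in> A" "b = x + a" by blast
    then have "x = b + a" by simp
    then show False using x G \<open>a \<in> A\<close> \<open>b \<in> A\<close> unfolding grp_def by blast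
  qed
  have inj: "inj_on (\<lambda>a. x + a) A" by (rule inj_onI) simp
  have "card (ext x A) = card A + card ((\<lambda>a. x + a) ` A)"
    unfolding ext_def by (rule card_Un_disjoint) (use disj in auto)
  also have "\<dots> = 2 * card A" using card_image[OF inj] by simp
  finally show ?thesis .
qed

lemma sum_ext: "x \<notin> A \<Longrightarrow> grp A \<Longrightarrow> (\<Sum>d\<in>ext x A. f d) = (\<Sum>a\<in>A. f a) + (\<Sum>a\<in>A. f (x + a))"
proof -
  assume x: "x \<notin> A" and G: "grp A"
  have disj: "A \<inter> (\<lambda>a. x + a) ` A = {}"
  proof (rule ccontr)
    assume "A \<inter> (\<lambda>a. x + a) ` A \<noteq> {}"
    then obtain a b where "a \<in> A" "b \<in> A" "b = x + a" by blast
    then have "x = b + a" by simp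
    then show False using x G \<open>a \<in> A\<close> \<open>b \<in> A\<close> unfolding grp_def by blast
  qed
  have inj: "inj_on (\<lambda>a. x + a) A" by (rule inj_onI) simp
  have "(\<Sum>d\<in>ext x A. f d) = (\<Sum>a\<in>A. f a) + (\<Sum>d\<in>(\<lambda>a. x + a) ` A. f d)"
    unfolding ext_def by (rule sum.union_disjoint) (use disj in auto)
  also have "(\<Sum>d\<in>(\<lambda>a. x + a) ` A. f d) = (\<Sum>a\<in>A. f (x + a))"
    using sum.reindex[OF inj] by simp
  finally show ?thesis .
qed

lemma card_span_indep_aux:
  fixes B :: "(bit^'n) set"
  shows "finite B \<Longrightarrow> vec.independent B \<Longrightarrow> card (vec.span B) = 2 ^ card B"
proof (induction B rule: finite_induct)
  case empty
  then show ?case by simp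
next
  case (insert b B)
  have ind: "vec.independent B" "b \<notin> vec.span B"
    using insert.hyps insert.prems by (simp_all add: vec.independent_insert)
  have "card (vec.span (insert b B)) = card (vec.span (insert b (vec.span B)))"
    by (simp only: vec.span_insert vec.span_span)
  also have "\<dots> = card (ext b (vec.span B))" by (simp add: span_ext)
  also have "\<dots> = 2 * card (vec.span B)"
    by (rule card_ext[OF ind(2)]) (rule subspace_grp, simp)
  also have "\<dots> = 2 ^ card (insert b B)" using insert ind by simp
  finally show ?case .
qed

lemma card_span_indep:
  fixes B :: "(bit^'n) set"
  shows "vec.independent B \<Longrightarrow> card (vec.span B) = 2 ^ card B"
  using card_span_indep_aux[of B] by simp

lemma card_subspace:
  fixes U :: "(bit^'n) set"
  assumes "vec.subspace U"
  shows "card U = 2 ^ vec.dim U"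
proof -
  obtain B where B: "B \<subseteq> U" "vec.independent B" "U \<subseteq> vec.span B" "card B = vec.dim U"
    by (rule vec.basis_exists)
  have "vec.span B = U" using vec.span_subspace[OF B(1,3) assms] .
  then show ?thesis using card_span_indep[OF B(2)] B(4) by simp
qed




lemma sum_shift: "(\<Sum>w\<in>UNIV. g (w + u)) = (\<Sum>w\<in>(UNIV::(bit^'n) set). g w)"
proof -
  have inj: "inj_on (\<lambda>w. w + u) (UNIV::(bit^'n) set)" by (rule inj_onI) simp
  have s: "(\<lambda>w. w + u) ` (UNIV::(bit^'n) set) = UNIV"
    by (rule surjI[of _ "\<lambda>w. w + u"]) simp
  have "(\<Sum>w\<in>(UNIV::(bit^'n) set). g w) = (\<Sum>w\<in>(\<lambda>w. w + u) ` UNIV. g w)" using s by simp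
  also have "\<dots> = (\<Sum>w\<in>UNIV. g (w + u))" using sum.reindex[OF inj] by simp
  finally show ?thesis by simp
qed

lemma sum_const_indicator: "finite U \<Longrightarrow> (\<Sum>w\<in>U. if w \<in> Z then c else 0) = real (card (U \<inter> Z)) * c"
  by (simp add: sum.inter_restrict[symmetric])

lemma chi3: "chi (a + b + c) = chi b * chi (a + c)"
  by (cases a; cases b; cases c) (simp_all add: chi_def)

lemma ind_chi2: "(if (q::bit) = 0 then 1 else 0) * chi b = (chi b + chi (q + b)) / (2::real)"
  by (cases q; cases b) (simp_all add: chi_def)

locale nsq =
  fixes Q :: "bit^'n \<Rightarrow> bit"
  assumes ns: "nonsingular_quadric Q"
begin

lemma qf: "quadratic_form Q" using ns by (simp add: nonsingular_quadric_def)

abbreviation B where "B \<equiv> polar Q"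

definition CC :: real where "CC = real CARD(bit^'n)"
definition SS :: real where "SS = (\<Sum>w\<in>UNIV. chi (Q w))"
definition rad :: "bit^'n \<Rightarrow> bool" where "rad u \<longleftrightarrow> (\<forall>w. B u w = 0)"
definition Zset :: "(bit^'n) set \<Rightarrow> (bit^'n) set" where
  "Zset D = {w. Q w = 0 \<and> (\<forall>d\<in>D. B d w = 0)}"

lemma rad_sing: "rad u \<Longrightarrow> Q u = 0 \<Longrightarrow> u = 0"
  using ns unfolding nonsingular_quadric_def rad_def by blast

lemma rad0: "rad 0" using polar_zero1[OF qf] by (simp add: rad_def)

lemma CC_pos: "CC > 0" by (simp add: CC_def)

lemma sum_B: "(\<Sum>w\<in>UNIV. chi (B u w)) = (if rad u then CC else 0)"
  using char_sum_grp[OF grp_UNIV, of "B u"] polar_add2[OF qf]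
  by (simp add: rad_def CC_def)

lemma sum_QB: "(\<Sum>w\<in>UNIV. chi (Q w + B u w)) = chi (Q u) * SS"
proof -
  have "SS = (\<Sum>w\<in>UNIV. chi (Q (w + u)))" unfolding SS_def by (rule sum_shift[symmetric])
  also have "\<dots> = (\<Sum>w\<in>UNIV. chi (Q u) * chi (Q w + B u w))"
  proof (rule sum.cong)
    fix w :: "bit^'n"
    have e: "Q (w + u) = Q w + Q u + B u w" using Q_add[of Q w u] polar_sym[OF qf, of w u] by simp
    show "chi (Q (w + u)) = chi (Q u) * chi (Q w + B u w)" unfolding e by (rule chi3)
  qed simp
  also have "\<dots> = chi (Q u) * (\<Sum>w\<in>UNIV. chi (Q w + B u w))" by (simp add: sum_distrib_left)
  finally have "chi (Q u) * SS = chi (Q u) * chi (Q u) * (\<Sum>w\<in>UNIV. chi (Q w + B u w))" by simp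
  then show ?thesis by (simp add: chi_sq)
qed

lemma ind_chi: "(if (b::bit) = 0 then 1 else 0) = (1 + chi b) / (2::real)"
  by (simp add: chi_def)

lemma MF:
  assumes G: "grp D"
  shows "real (card D) * real (card (Zset D)) =
         (\<Sum>d\<in>D. (if rad d then CC else 0) + chi (Q d) * SS) / 2"
proof -
  have one: "\<And>w. (\<Sum>d\<in>D. chi (B d w)) = (if \<forall>d\<in>D. B d w = 0 then real (card D) else 0)"
    by (intro char_sum_grp[OF G] polar_add1[OF qf])
  have "(\<Sum>w\<in>UNIV. (if Q w = 0 then 1 else 0) * (\<Sum>d\<in>D. chi (B d w)))
        = (\<Sum>w\<in>UNIV. if w \<in> Zset D then real (card D) else 0)"
    by (rule sum.cong) (auto simp: Zset_def one)
  also have "\<dots> = real (card D) * real (card (Zset D))"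
    by (simp add: sum_const_indicator)
  finally have L: "(\<Sum>w\<in>UNIV. (if Q w = 0 then 1 else 0) * (\<Sum>d\<in>D. chi (B d w)))
        = real (card D) * real (card (Zset D))" .
  have "(\<Sum>w\<in>UNIV. (if Q w = 0 then 1 else 0) * (\<Sum>d\<in>D. chi (B d w)))
      = (\<Sum>w\<in>UNIV. \<Sum>d\<in>D. (chi (B d w) + chi (Q w + B d w)) / 2)"
    by (rule sum.cong[OF refl]) (simp only: sum_distrib_left ind_chi2)
  also have "\<dots> = (\<Sum>d\<in>D. \<Sum>w\<in>UNIV. (chi (B d w) + chi (Q w + B d w)) / 2)"
    by (rule sum.swap)
  also have "\<dots> = (\<Sum>d\<in>D. ((if rad d then CC else 0) + chi (Q d) * SS) / 2)"
    by (rule sum.cong) (simp_all add: sum_divide_distrib[symmetric] sum.distrib sum_B sum_QB)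
  also have "\<dots> = (\<Sum>d\<in>D. (if rad d then CC else 0) + chi (Q d) * SS) / 2"
    by (simp add: sum_divide_distrib)
  finally show ?thesis using L by simp
qed

lemma MF_TS:
  assumes G: "grp D" and TS: "\<And>d. d \<in> D \<Longrightarrow> Q d = 0"
  shows "real (card D) * real (card (Zset D)) = (CC + real (card D) * SS) / 2"
proof -
  have z: "0 \<in> D" using G by (simp add: grp_def)
  have "(\<Sum>d\<in>D. (if rad d then CC else 0) + chi (Q d) * SS)
       = (\<Sum>d\<in>D. (if d = 0 then CC else 0) + SS)"
    by (rule sum.cong) (auto simp: TS chi_def rad0 dest: rad_sing)
  also have "\<dots> = CC + real (card D) * SS"
    using z by (simp add: sum.distrib)
  finally show ?thesis using MF[OF G] by simp
qed

end



lemma ex_const: "(\<And>x. x \<in> S \<Longrightarrow> real (f x) = c) \<Longrightarrow> \<exists>k. \<forall>x\<in>S. f x = k"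
proof (cases "S = {}")
  case False
  assume h: "\<And>x. x \<in> S \<Longrightarrow> real (f x) = c"
  obtain x0 where "x0 \<in> S" using False by blast
  then have "\<forall>x\<in>S. f x = f x0" using h by (metis of_nat_eq_iff)
  then show ?thesis by blast
qed simp

lemma card_diff_real: "F \<subseteq> Z \<Longrightarrow> finite Z \<Longrightarrow> real (card (Z - F)) = real (card Z) - real (card F)"
  by (simp add: card_Diff_subset card_mono finite_subset of_nat_diff)

lemma qadj_sym: "qadj Q x y = qadj Q y x"
  unfolding qadj_def by (auto simp: insert_commute)

lemma qadj_irrefl: "\<not> qadj Q x x"
  unfolding qadj_def by simp

context nsq
begin

lemma Q00: "Q 0 = 0" by (rule Q0[OF qf])

lemma qadj_iff:
  assumes x: "x \<in> qpoints Q" and y: "y \<in> qpoints Q"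
  shows "qadj Q x y \<longleftrightarrow> x \<noteq> y \<and> B x y = 0"
proof -
  have qx: "Q x = 0" and qy: "Q y = 0" using x y by (auto simp: qpoints_def)
  have qxy: "Q (x + y) = B x y" using Q_add[of Q x y] qx qy by simp
  show ?thesis
  proof
    assume h: "qadj Q x y"
    then have ne: "x \<noteq> y" by (simp add: qadj_def)
    then have "x + y \<noteq> 0" by (simp add: vec_eq_add_iff)
    then have "Q (x + y) = 0" using h unfolding qadj_def on_quadric_def span2 by blast
    then show "x \<noteq> y \<and> B x y = 0" using ne qxy by simp
  next
    assume h: "x \<noteq> y \<and> B x y = 0"
    then show "qadj Q x y" unfolding qadj_def on_quadric_def span2 using qx qy qxy by auto
  qed
qed

lemma grp2: "grp {0, x::bit^'n}" by (auto simp: grp_def)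

lemma card2: "x \<noteq> 0 \<Longrightarrow> card {0, x::bit^'n} = 2" by simp

lemma deg:
  assumes x: "x \<in> qpoints Q"
  shows "real (card (nbrs (qpoints Q) (qadj Q) x)) = (CC + 2 * SS) / 4 - 2"
proof -
  have qx: "Q x = 0" "x \<noteq> 0" using x by (auto simp: qpoints_def)
  have N: "nbrs (qpoints Q) (qadj Q) x = Zset {0, x} - {0, x}"
    using x by (auto simp: nbrs_def qadj_iff Zset_def qpoints_def polar_zero1[OF qf])
  have sub: "{0, x} \<subseteq> Zset {0, x}"
    using qx by (auto simp: Zset_def Q00 polar_zero1[OF qf] polar_zero2[OF qf] polar_self[OF qf])
  have "real (card {0, x}) * real (card (Zset {0, x})) = (CC + real (card {0, x}) * SS) / 2"
    by (rule MF_TS[OF grp2]) (use qx Q00 in auto)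
  then have "2 * real (card (Zset {0, x})) = (CC + 2 * SS) / 2" using card2[OF qx(2)] by simp
  moreover have "real (card (nbrs (qpoints Q) (qadj Q) x)) = real (card (Zset {0, x})) - 2"
    unfolding N using card_diff_real[OF sub] card2[OF qx(2)] by simp
  ultimately show ?thesis by simp
qed

lemma four_facts:
  assumes x: "x \<in> qpoints Q" and y: "y \<in> qpoints Q" and ne: "x \<noteq> y"
  shows "card {0, x, y, x + y} = 4" "grp {0, x, y, x + y}"
proof -
  have "x \<noteq> 0" "y \<noteq> 0" using x y by (auto simp: qpoints_def)
  moreover have "x + y \<noteq> 0" using ne by (simp add: vec_eq_add_iff)
  moreover have "x + y \<noteq> x" using \<open>y \<noteq> 0\<close> by (metis add_left_cancel add_0_right)
  moreover have "x + y \<noteq> y" using \<open>x \<noteq> 0\<close> by (metis add_right_cancel add_0_left)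
  ultimately show "card {0, x, y, x + y} = 4" using ne by simp
  show "grp {0, x, y, x + y}" by (rule grp4)
qed

lemma cn_adj:
  assumes x: "x \<in> qpoints Q" and y: "y \<in> qpoints Q" and ne: "x \<noteq> y" and b: "B x y = 0"
  shows "real (card (nbrs (qpoints Q) (qadj Q) x \<inter> nbrs (qpoints Q) (qadj Q) y)) = (CC + 4 * SS) / 8 - 3"
proof -
  let ?D = "{0, x, y, x + y}"
  have qx: "Q x = 0" "x \<noteq> 0" "Q y = 0" "y \<noteq> 0" using x y by (auto simp: qpoints_def)
  have byx: "B y x = 0" using b polar_sym[OF qf, of x y] by simp
  have add: "\<And>w. B (x + y) w = B x w + B y w" by (rule polar_add1[OF qf])
  have N: "nbrs (qpoints Q) (qadj Q) x \<inter> nbrs (qpoints Q) (qadj Q) y = Zset ?D - {0, x, y}"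
    using x y by (auto simp: nbrs_def qadj_iff Zset_def qpoints_def polar_zero1[OF qf] add)
  have sub: "{0, x, y} \<subseteq> Zset ?D"
    using qx b byx by (auto simp: Zset_def Q00 polar_zero1[OF qf] polar_zero2[OF qf] polar_self[OF qf] add)
  have c3: "card {0, x, y} = 3" using qx ne by simp
  have qxy: "Q (x + y) = 0" using Q_add[of Q x y] qx b by simp
  have "real (card ?D) * real (card (Zset ?D)) = (CC + real (card ?D) * SS) / 2"
    by (rule MF_TS[OF four_facts(2)[OF x y ne]]) (use qx Q00 qxy in auto)
  then have "4 * real (card (Zset ?D)) = (CC + 4 * SS) / 2" using four_facts(1)[OF x y ne] by simp
  moreover have "real (card (nbrs (qpoints Q) (qadj Q) x \<inter> nbrs (qpoints Q) (qadj Q) y)) = real (card (Zset ?D)) - 3"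
    unfolding N using card_diff_real[OF sub] c3 by simp
  ultimately show ?thesis by simp
qed

lemma cn_nonadj:
  assumes x: "x \<in> qpoints Q" and y: "y \<in> qpoints Q" and ne: "x \<noteq> y" and b: "B x y = 1"
  shows "real (card (nbrs (qpoints Q) (qadj Q) x \<inter> nbrs (qpoints Q) (qadj Q) y)) = (CC + 2 * SS) / 8 - 1"
proof -
  let ?D = "{0, x, y, x + y}"
  have qx: "Q x = 0" "x \<noteq> 0" "Q y = 0" "y \<noteq> 0" using x y by (auto simp: qpoints_def)
  have byx: "B y x = 1" using b polar_sym[OF qf, of x y] by simp
  have add: "\<And>w. B (x + y) w = B x w + B y w" by (rule polar_add1[OF qf])
  have N: "nbrs (qpoints Q) (qadj Q) x \<inter> nbrs (qpoints Q) (qadj Q) y = Zset ?D - {0}"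
    using x y b byx by (auto simp: nbrs_def qadj_iff Zset_def qpoints_def polar_zero1[OF qf] add polar_self[OF qf])
  have sub: "{0} \<subseteq> Zset ?D"
    by (auto simp: Zset_def Q00 polar_zero2[OF qf])
  have qxy: "Q (x + y) = 1" using Q_add[of Q x y] qx b by simp
  have d: "0 \<noteq> x" "0 \<noteq> y" "0 \<noteq> x + y" "x \<noteq> y" "x \<noteq> x + y" "y \<noteq> x + y"
    using four_facts(1)[OF x y ne] by (auto simp: card_insert_if split: if_splits)
  have rx: "\<not> rad x" "\<not> rad y" using qx rad_sing by auto
  have rxy: "\<not> rad (x + y)"
  proof
    assume "rad (x + y)"
    then have "B (x + y) x = 0" by (simp add: rad_def)
    then show False using add[of x] polar_self[OF qf, of x] byx by simp
  qed
  have "(\<Sum>d\<in>?D. (if rad d then CC else 0) + chi (Q d) * SS) = CC + 2 * SS"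
    using d rx rxy rad0 by (simp add: Q00 qx qxy chi_def)
  then have "4 * real (card (Zset ?D)) = (CC + 2 * SS) / 2"
    using MF[OF four_facts(2)[OF x y ne]] four_facts(1)[OF x y ne] by simp
  moreover have "real (card (nbrs (qpoints Q) (qadj Q) x \<inter> nbrs (qpoints Q) (qadj Q) y)) = real (card (Zset ?D)) - 1"
    unfolding N using card_diff_real[OF sub] by simp
  ultimately show ?thesis by simp
qed

lemma srg_gamma: "\<exists>k l m. strongly_regular (qpoints Q) (qadj Q) (card (qpoints Q)) k l m"
proof -
  obtain k where k: "\<forall>x\<in>qpoints Q. card (nbrs (qpoints Q) (qadj Q) x) = k"
    using ex_const[of "qpoints Q" "\<lambda>x. card (nbrs (qpoints Q) (qadj Q) x)", OF deg] by blast
  obtain l where l: "\<forall>p\<in>{(x, y). x \<in> qpoints Q \<and> y \<in> qpoints Q \<and> x \<noteq> y \<and> qadj Q x y}.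
      (\<lambda>(x, y). card (nbrs (qpoints Q) (qadj Q) x \<inter> nbrs (qpoints Q) (qadj Q) y)) p = l"
    using ex_const[of "{(x, y). x \<in> qpoints Q \<and> y \<in> qpoints Q \<and> x \<noteq> y \<and> qadj Q x y}"
        "\<lambda>(x, y). card (nbrs (qpoints Q) (qadj Q) x \<inter> nbrs (qpoints Q) (qadj Q) y)"
        "(CC + 4 * SS) / 8 - 3"]
    using cn_adj qadj_iff by fastforce
  obtain m where m: "\<forall>p\<in>{(x, y). x \<in> qpoints Q \<and> y \<in> qpoints Q \<and> x \<noteq> y \<and> \<not> qadj Q x y}.
      (\<lambda>(x, y). card (nbrs (qpoints Q) (qadj Q) x \<inter> nbrs (qpoints Q) (qadj Q) y)) p = m"
    using ex_const[of "{(x, y). x \<in> qpoints Q \<and> y \<in> qpoints Q \<and> x \<noteq> y \<and> \<not> qadj Q x y}"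
        "\<lambda>(x, y). card (nbrs (qpoints Q) (qadj Q) x \<inter> nbrs (qpoints Q) (qadj Q) y)"
        "(CC + 2 * SS) / 8 - 1"]
    using cn_nonadj qadj_iff by fastforce
  have "strongly_regular (qpoints Q) (qadj Q) (card (qpoints Q)) k l m"
    unfolding strongly_regular_def using k l m qadj_irrefl[of Q] by (auto dest: qadj_sym[THEN iffD1])
  then show ?thesis by blast
qed

end



definition mm :: "'a set \<Rightarrow> ('a \<Rightarrow> 'a \<Rightarrow> real) \<Rightarrow> ('a \<Rightarrow> 'a \<Rightarrow> real) \<Rightarrow> 'a \<Rightarrow> 'a \<Rightarrow> real" where
  "mm V P R u v = (\<Sum>w\<in>V. P u w * R w v)"

lemma mm_assoc: "mm V (mm V P R) T u v = mm V P (mm V R T) u v"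
  unfolding mm_def
  by (simp add: sum_distrib_left sum_distrib_right mult.assoc) (rule sum.swap)

lemma mm_cong: "(\<And>w. w \<in> V \<Longrightarrow> P u w = P' u w) \<Longrightarrow> (\<And>w. w \<in> V \<Longrightarrow> R w v = R' w v)
   \<Longrightarrow> mm V P R u v = mm V P' R' u v"
  unfolding mm_def by (rule sum.cong) auto

definition ind :: "('a \<Rightarrow> 'a \<Rightarrow> bool) \<Rightarrow> 'a \<Rightarrow> 'a \<Rightarrow> real" where
  "ind E u v = (if E u v then 1 else 0)"

lemma mm_ind:
  assumes fin: "finite V" and sym: "\<And>x y. x \<in> V \<Longrightarrow> y \<in> V \<Longrightarrow> E x y \<Longrightarrow> E y x"
    and u: "u \<in> V" and v: "v \<in> V"
  shows "mm V (ind E) (ind E) u v = real (card (nbrs V E u \<inter> nbrs V E v))"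
proof -
  have "mm V (ind E) (ind E) u v = (\<Sum>w\<in>V. if w \<in> {w. E u w \<and> E v w} then 1 else 0)"
    unfolding mm_def ind_def by (rule sum.cong) (auto dest: sym[OF _ v] sym[OF v])
  also have "\<dots> = real (card (V \<inter> {w. E u w \<and> E v w}))"
    by (subst sum.inter_restrict[OF fin, symmetric]) simp
  also have "V \<inter> {w. E u w \<and> E v w} = nbrs V E u \<inter> nbrs V E v" by (auto simp: nbrs_def)
  finally show ?thesis .
qed

lemma srg_mm:
  assumes "strongly_regular V E n k l m" and u: "u \<in> V" and v: "v \<in> V"
  shows "mm V (ind E) (ind E) u v =
    (real k - real m) * (if u = v then 1 else 0) + (real l - real m) * ind E u v + real m"
proof -
  have fin: "finite V" and irr: "\<forall>x\<in>V. \<not> E x x" and sym: "\<forall>x\<in>V. \<forall>y\<in>V. E x y \<longrightarrow> E y x"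
    and K: "\<forall>x\<in>V. card (nbrs V E x) = k"
    and L: "\<forall>x\<in>V. \<forall>y\<in>V. x \<noteq> y \<and> E x y \<longrightarrow> card (nbrs V E x \<inter> nbrs V E y) = l"
    and M: "\<forall>x\<in>V. \<forall>y\<in>V. x \<noteq> y \<and> \<not> E x y \<longrightarrow> card (nbrs V E x \<inter> nbrs V E y) = m"
    using assms(1) unfolding strongly_regular_def by auto
  have e: "mm V (ind E) (ind E) u v = real (card (nbrs V E u \<inter> nbrs V E v))"
    by (rule mm_ind[OF fin _ u v]) (use sym in blast)
  show ?thesis
  proof (cases "u = v")
    case True then show ?thesis using e K u irr by (simp add: ind_def)
  next
    case False then show ?thesis using e L M u v by (simp add: ind_def)
  qed
qed

lemma mm_srg:
  assumes fin: "finite V" and cv: "card V = n"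
    and irr: "\<forall>x\<in>V. \<not> E x x" and sym: "\<forall>x\<in>V. \<forall>y\<in>V. E x y \<longrightarrow> E y x"
    and H: "\<And>u v. u \<in> V \<Longrightarrow> v \<in> V \<Longrightarrow> mm V (ind E) (ind E) u v =
    (real k - real m) * (if u = v then 1 else 0) + (real l - real m) * ind E u v + real m"
  shows "strongly_regular V E n k l m"
proof -
  have e: "\<And>u v. u \<in> V \<Longrightarrow> v \<in> V \<Longrightarrow> mm V (ind E) (ind E) u v = real (card (nbrs V E u \<inter> nbrs V E v))"
    by (rule mm_ind[OF fin]) (use sym in blast)+
  have K: "\<forall>x\<in>V. card (nbrs V E x) = k"
  proof
    fix x assume x: "x \<in> V"
    have "real (card (nbrs V E x)) = real k" using H[OF x x] e[OF x x] irr x by (simp add: ind_def)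
    then show "card (nbrs V E x) = k" by simp
  qed
  have L: "\<forall>x\<in>V. \<forall>y\<in>V. x \<noteq> y \<and> E x y \<longrightarrow> card (nbrs V E x \<inter> nbrs V E y) = l"
  proof (intro ballI impI)
    fix x y assume x: "x \<in> V" and y: "y \<in> V" and h: "x \<noteq> y \<and> E x y"
    have "real (card (nbrs V E x \<inter> nbrs V E y)) = real l" using H[OF x y] e[OF x y] h by (simp add: ind_def)
    then show "card (nbrs V E x \<inter> nbrs V E y) = l" by simp
  qed
  have M: "\<forall>x\<in>V. \<forall>y\<in>V. x \<noteq> y \<and> \<not> E x y \<longrightarrow> card (nbrs V E x \<inter> nbrs V E y) = m"
  proof (intro ballI impI)
    fix x y assume x: "x \<in> V" and y: "y \<in> V" and h: "x \<noteq> y \<and> \<not> E x y"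
    have "real (card (nbrs V E x \<inter> nbrs V E y)) = real m" using H[OF x y] e[OF x y] h by (simp add: ind_def)
    then show "card (nbrs V E x \<inter> nbrs V E y) = m" by simp
  qed
  show ?thesis unfolding strongly_regular_def using fin cv irr sym K L M by blast
qed




definition Idm :: "'a \<Rightarrow> 'a \<Rightarrow> real" where "Idm u v = (if u = v then 1 else 0)"

lemma mm_Id_left: "a \<in> V \<Longrightarrow> finite V \<Longrightarrow> mm V Idm T a v = T a v"
proof -
  assume "a \<in> V" "finite V"
  have "mm V Idm T a v = (\<Sum>w\<in>V. if a = w then T w v else 0)"
    unfolding mm_def Idm_def by (rule sum.cong) auto
  then show ?thesis using \<open>a \<in> V\<close> \<open>finite V\<close> by simp
qed

lemma mm_lin_left:
  "mm V (\<lambda>a d. \<alpha> * A a d + \<beta> * B a d + \<gamma>) T u v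
    = \<alpha> * mm V A T u v + \<beta> * mm V B T u v + \<gamma> * (\<Sum>d\<in>V. T d v)"
  unfolding mm_def by (simp add: algebra_simps sum.distrib sum_distrib_left)

lemma mm_lin_right:
  "mm V P (\<lambda>d v. \<alpha> * A d v + \<beta> * B d v + \<gamma>) u v
    = \<alpha> * mm V P A u v + \<beta> * mm V P B u v + \<gamma> * (\<Sum>d\<in>V. P u d)"
  unfolding mm_def by (simp add: algebra_simps sum.distrib sum_distrib_left)

locale gmp =
  fixes V :: "'a set" and E X Y
  assumes fin: "finite V" and gm: "godsil_mckay_partition V E X Y"
    and irr: "\<forall>x\<in>V. \<not> E x x" and sym: "\<forall>x\<in>V. \<forall>y\<in>V. E x y \<longrightarrow> E y x"
begin

lemma XV: "X \<subseteq> V" and YV: "Y \<subseteq> V" and Xne: "X \<noteq> {}" and disj: "X \<inter> Y = {}" and un: "X \<union> Y = V"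
  using gm unfolding godsil_mckay_partition_def by auto

lemma finX: "finite X" using XV fin finite_subset by blast

definition cX :: real where "cX = 2 / real (card X)"

lemma cn: "cX * real (card X) = 2"
  using Xne finX by (simp add: cX_def)

definition Qm :: "'a \<Rightarrow> 'a \<Rightarrow> real" where
  "Qm u a = (if u \<in> X \<and> a \<in> X then cX else 0) + (if u = a then (if u \<in> X then -1 else 1) else 0)"

lemma Qm_left:
  assumes u: "u \<in> V"
  shows "(\<Sum>a\<in>V. Qm u a * G a) = (if u \<in> X then cX * (\<Sum>a\<in>X. G a) - G u else G u)"
proof -
  have "(\<Sum>a\<in>V. Qm u a * G a) = (\<Sum>a\<in>V. (if u \<in> X \<and> a \<in> X then cX * G a else 0))
      + (\<Sum>a\<in>V. if u = a then (if u \<in> X then -1 else 1) * G a else 0)"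
    unfolding sum.distrib[symmetric] by (rule sum.cong) (auto simp: Qm_def algebra_simps)
  also have "(\<Sum>a\<in>V. if u = a then (if u \<in> X then -1 else 1) * G a else 0) = (if u \<in> X then -1 else 1) * G u"
    using u fin by simp
  also have "(\<Sum>a\<in>V. (if u \<in> X \<and> a \<in> X then cX * G a else 0)) = (if u \<in> X then cX * (\<Sum>a\<in>X. G a) else 0)"
  proof (cases "u \<in> X")
    case True
    have "(\<Sum>a\<in>V. (if a \<in> X then cX * G a else 0)) = (\<Sum>a\<in>V \<inter> X. cX * G a)"
      by (subst sum.inter_restrict[OF fin]) simp
    also have "V \<inter> X = X" using XV by blast
    finally show ?thesis using True by (simp add: sum_distrib_left)
  qed simp
  finally show ?thesis by simp
qed

lemma Qm_right:
  assumes v: "v \<in> V"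
  shows "(\<Sum>b\<in>V. G b * Qm b v) = (if v \<in> X then cX * (\<Sum>b\<in>X. G b) - G v else G v)"
proof -
  have "(\<Sum>b\<in>V. G b * Qm b v) = (\<Sum>b\<in>V. (if v \<in> X \<and> b \<in> X then cX * G b else 0))
      + (\<Sum>b\<in>V. if v = b then (if v \<in> X then -1 else 1) * G b else 0)"
    unfolding sum.distrib[symmetric] by (rule sum.cong) (auto simp: Qm_def algebra_simps)
  also have "(\<Sum>b\<in>V. if v = b then (if v \<in> X then -1 else 1) * G b else 0) = (if v \<in> X then -1 else 1) * G v"
    using v fin by simp
  also have "(\<Sum>b\<in>V. (if v \<in> X \<and> b \<in> X then cX * G b else 0)) = (if v \<in> X then cX * (\<Sum>b\<in>X. G b) else 0)"
  proof (cases "v \<in> X")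
    case True
    have "(\<Sum>b\<in>V. (if b \<in> X then cX * G b else 0)) = (\<Sum>b\<in>V \<inter> X. cX * G b)"
      by (subst sum.inter_restrict[OF fin]) simp
    also have "V \<inter> X = X" using XV by blast
    finally show ?thesis using True by (simp add: sum_distrib_left)
  qed simp
  finally show ?thesis by simp
qed

lemma sumX_Qm: "(\<Sum>w\<in>X. Qm w v) = (if v \<in> X then 1 else 0)"
proof -
  have "(\<Sum>w\<in>X. Qm w v) = (\<Sum>w\<in>X. (if v \<in> X then cX else 0)) + (\<Sum>w\<in>X. if w = v then (if w \<in> X then -1 else 1) else 0)"
    unfolding sum.distrib[symmetric] by (rule sum.cong) (auto simp: Qm_def)
  also have "\<dots> = real (card X) * (if v \<in> X then cX else 0) + (if v \<in> X then -1 else 0)"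
    using finX by simp
  finally show ?thesis using cn by (simp add: mult.commute)
qed

lemma Q1: "u \<in> V \<Longrightarrow> v \<in> V \<Longrightarrow> mm V Qm Qm u v = Idm u v"
  unfolding mm_def using Qm_left[of u "\<lambda>w. Qm w v"] sumX_Qm[of v]
  by (auto simp: Qm_def Idm_def)

lemma Q2l: "u \<in> V \<Longrightarrow> (\<Sum>a\<in>V. Qm u a) = 1"
  using Qm_left[of u "\<lambda>_. 1"] cn by (simp add: mult.commute)

lemma Q2r: "v \<in> V \<Longrightarrow> (\<Sum>b\<in>V. Qm b v) = 1"
  using Qm_right[of v "\<lambda>_. 1"] cn by (simp add: mult.commute)

definition eX :: "'a \<Rightarrow> nat" where "eX b = card (nbrs X E b)"

lemma sum_ind_X: "b \<in> V \<Longrightarrow> (\<Sum>a\<in>X. ind E a b) = real (eX b)"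
proof -
  assume b: "b \<in> V"
  have "(\<Sum>a\<in>X. ind E a b) = (\<Sum>a\<in>X. if a \<in> {a. E b a} then 1 else 0)"
    by (rule sum.cong) (use sym XV b in \<open>auto simp: ind_def\<close>)
  also have "\<dots> = real (card (X \<inter> {a. E b a}))"
    by (subst sum.inter_restrict[OF finX, symmetric]) simp
  also have "X \<inter> {a. E b a} = nbrs X E b" by (auto simp: nbrs_def)
  finally show ?thesis by (simp add: eX_def)
qed

lemma sum_ind_X2: "u \<in> V \<Longrightarrow> (\<Sum>b\<in>X. ind E u b) = real (eX u)"
proof -
  assume u: "u \<in> V"
  have "(\<Sum>b\<in>X. ind E u b) = (\<Sum>b\<in>X. ind E b u)"
    by (rule sum.cong) (use sym XV u in \<open>auto simp: ind_def\<close>)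
  then show ?thesis using sum_ind_X[OF u] by simp
qed

lemma Ycase:
  assumes y: "y \<in> Y" and x: "x \<in> X"
  shows "cX * real (eX y) - ind E y x = ind (gm_switch V E X Y) y x"
    and "cX * real (eX y) - ind E x y = ind (gm_switch V E X Y) x y"
proof -
  have yV: "y \<in> V" using y YV by blast
  have xV: "x \<in> V" using x XV by blast
  have yX: "y \<notin> X" using y disj by blast
  have xY: "x \<notin> Y" using x disj by blast
  have exy: "E x y = E y x" using sym xV yV by blast
  have c: "eX y = 0 \<or> 2 * eX y = card X \<or> eX y = card X"
    using gm y unfolding godsil_mckay_partition_def eX_def by blast
  have cpos: "card X > 0" using Xne finX by (simp add: card_gt_0_iff)
  have sw1: "gm_switch V E X Y y x = (if 2 * eX y = card X then \<not> E y x else E y x)"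
    unfolding gm_switch_def eX_def using y x yX xY by auto
  have sw2: "gm_switch V E X Y x y = (if 2 * eX y = card X then \<not> E x y else E x y)"
    unfolding gm_switch_def eX_def using y x yX xY by auto
  from c have "cX * real (eX y) - ind E y x = ind (gm_switch V E X Y) y x
       \<and> cX * real (eX y) - ind E x y = ind (gm_switch V E X Y) x y"
  proof (elim disjE)
    assume e0: "eX y = 0"
    then have "nbrs X E y = {}" using finX by (simp add: eX_def nbrs_def)
    then have "\<not> E y x" using x by (auto simp: nbrs_def)
    then show ?thesis using e0 cpos sw1 sw2 exy by (simp add: ind_def)
  next
    assume e: "2 * eX y = card X"
    have "cX * real (eX y) = 1" 
    proof -
      have "eX y > 0" using e cpos by simp
      then show ?thesis using e[symmetric] by (simp add: cX_def)
    qed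
    then show ?thesis using e sw1 sw2 exy by (simp add: ind_def)
  next
    assume e: "eX y = card X"
    have "nbrs X E y = X"
      by (rule card_subset_eq[OF finX]) (use e in \<open>auto simp: eX_def nbrs_def\<close>)
    then have "E y x" using x by (auto simp: nbrs_def)
    moreover have "2 * eX y \<noteq> card X" using e cpos by simp
    ultimately show ?thesis using e cn sw1 sw2 exy by (simp add: ind_def)
  qed
  then show "cX * real (eX y) - ind E y x = ind (gm_switch V E X Y) y x"
    and "cX * real (eX y) - ind E x y = ind (gm_switch V E X Y) x y" by auto
qed

end



context gmp
begin

lemma GMeq:
  assumes u: "u \<in> V" and v: "v \<in> V"
  shows "ind (gm_switch V E X Y) u v = mm V (mm V Qm (ind E)) Qm u v"
proof -
  have P: "\<And>b. b \<in> V \<Longrightarrow> mm V Qm (ind E) u b = (if u \<in> X then cX * real (eX b) - ind E u b else ind E u b)"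
    unfolding mm_def using Qm_left[OF u] sum_ind_X by simp
  have R: "mm V (mm V Qm (ind E)) Qm u v =
      (if v \<in> X then cX * (\<Sum>b\<in>X. mm V Qm (ind E) u b) - mm V Qm (ind E) u v else mm V Qm (ind E) u v)"
    unfolding mm_def[of V "mm V Qm (ind E)"] using Qm_right[OF v] by simp
  have uY: "u \<notin> X \<Longrightarrow> u \<in> Y" and vY: "v \<notin> X \<Longrightarrow> v \<in> Y" using u v un by auto
  show ?thesis
  proof (cases "u \<in> X"; cases "v \<in> X")
    assume ux: "u \<in> X" and vx: "v \<in> X"
    obtain k where k: "\<forall>x\<in>X. card (nbrs X E x) = k" using gm unfolding godsil_mckay_partition_def by blast
    have "(\<Sum>b\<in>X. mm V Qm (ind E) u b) = (\<Sum>b\<in>X. cX * real k - ind E u b)"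
      by (rule sum.cong) (use P XV ux k in \<open>auto simp: eX_def\<close>)
    also have "\<dots> = real (card X) * cX * real k - real (eX u)"
      using sum_ind_X2[OF u] by (simp add: sum_subtractf)
    also have "\<dots> = real k" using cn k ux by (simp add: eX_def mult.commute)
    finally have "(\<Sum>b\<in>X. mm V Qm (ind E) u b) = real k" .
    moreover have "mm V Qm (ind E) u v = cX * real k - ind E u v" using P[OF v] ux vx k by (simp add: eX_def)
    moreover have "gm_switch V E X Y u v = E u v" unfolding gm_switch_def using ux vx disj by auto
    ultimately show ?thesis using R vx by (simp add: ind_def)
  next
    assume ux: "u \<in> X" and vx: "v \<notin> X"
    show ?thesis using R vx P[OF v] ux Ycase(2)[OF vY[OF vx] ux] by simp
  next
    assume ux: "u \<notin> X" and vx: "v \<in> X"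
    have "(\<Sum>b\<in>X. mm V Qm (ind E) u b) = (\<Sum>b\<in>X. ind E u b)"
      by (rule sum.cong) (use P XV ux in auto)
    then show ?thesis using R vx P[OF v] ux sum_ind_X2[OF u] Ycase(1)[OF uY[OF ux] vx] by simp
  next
    assume ux: "u \<notin> X" and vx: "v \<notin> X"
    have "gm_switch V E X Y u v = E u v" unfolding gm_switch_def using ux vx by auto
    then show ?thesis using R vx P[OF v] ux by (simp add: ind_def)
  qed
qed

lemma switch_srg:
  assumes srg: "strongly_regular V E n k l m"
  shows "strongly_regular V (gm_switch V E X Y) n k l m"
proof -
  let ?E' = "gm_switch V E X Y"
  let ?Mq = "ind E" and ?Mp = "ind ?E'"
  let ?P0 = "mm V Qm ?Mq"
  let ?R = "mm V ?P0 Qm"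
  define K where "K = real k - real m"
  define L where "L = real l - real m"
  have cV: "card V = n" using srg by (simp add: strongly_regular_def)
  have irr': "\<forall>x\<in>V. \<not> ?E' x x"
    using irr disj unfolding gm_switch_def by auto
  have sym': "\<forall>x\<in>V. \<forall>y\<in>V. ?E' x y \<longrightarrow> ?E' y x"
    using sym unfolding gm_switch_def by auto
  have step3: "\<And>w. w \<in> V \<Longrightarrow> v \<in> V \<Longrightarrow> mm V Qm ?R w v = mm V ?Mq Qm w v" for v
  proof -
    fix w assume w: "w \<in> V"
    have "mm V Qm ?R w v = mm V (mm V Qm ?P0) Qm w v" by (rule mm_assoc[symmetric])
    also have "\<dots> = mm V ?Mq Qm w v"
    proof (rule mm_cong)
      fix z assume z: "z \<in> V"
      have "mm V Qm ?P0 w z = mm V (mm V Qm Qm) ?Mq w z" by (rule mm_assoc[symmetric])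
      also have "\<dots> = mm V Idm ?Mq w z" by (rule mm_cong) (use Q1 w in auto)
      also have "\<dots> = ?Mq w z" by (rule mm_Id_left[OF w fin])
      finally show "mm V Qm ?P0 w z = ?Mq w z" .
    qed simp
    finally show "mm V Qm ?R w v = mm V ?Mq Qm w v" .
  qed
  have main: "\<And>u v. u \<in> V \<Longrightarrow> v \<in> V \<Longrightarrow> mm V ?Mp ?Mp u v = K * Idm u v + L * ?Mp u v + real m"
  proof -
    fix u v assume u: "u \<in> V" and v: "v \<in> V"
    have "mm V ?Mp ?Mp u v = mm V ?R ?R u v"
      by (rule mm_cong) (use GMeq u v in auto)
    also have "\<dots> = mm V ?P0 (mm V Qm ?R) u v" by (rule mm_assoc)
    also have "\<dots> = mm V ?P0 (mm V ?Mq Qm) u v"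
      by (rule mm_cong) (use step3 v in auto)
    also have "\<dots> = mm V Qm (mm V ?Mq (mm V ?Mq Qm)) u v" by (rule mm_assoc)
    also have "\<dots> = mm V Qm (\<lambda>a v. K * Qm a v + L * mm V ?Mq Qm a v + real m) u v"
    proof (rule mm_cong)
      fix a assume a: "a \<in> V"
      have "mm V ?Mq (mm V ?Mq Qm) a v = mm V (mm V ?Mq ?Mq) Qm a v" by (rule mm_assoc[symmetric])
      also have "\<dots> = mm V (\<lambda>a d. K * Idm a d + L * ?Mq a d + real m) Qm a v"
        by (rule mm_cong) (use srg_mm[OF srg] a in \<open>auto simp: K_def L_def Idm_def\<close>)
      also have "\<dots> = K * Qm a v + L * mm V ?Mq Qm a v + real m"
        unfolding mm_lin_left[of V K Idm L "ind E" "real m" Qm a v] using mm_Id_left[OF a fin] Q2r[OF v] by simp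
      finally show "mm V ?Mq (mm V ?Mq Qm) a v = K * Qm a v + L * mm V ?Mq Qm a v + real m" .
    qed simp
    also have "\<dots> = K * mm V Qm Qm u v + L * mm V Qm (mm V ?Mq Qm) u v + real m"
      unfolding mm_lin_right[of V Qm K Qm L "mm V ?Mq Qm" "real m" u v] using Q2l[OF u] by simp
    also have "mm V Qm (mm V ?Mq Qm) u v = ?R u v" by (rule mm_assoc[symmetric])
    also have "?R u v = ?Mp u v" using GMeq[OF u v] by simp
    finally show "mm V ?Mp ?Mp u v = K * Idm u v + L * ?Mp u v + real m" using Q1[OF u v] by simp
  qed
  show ?thesis
    by (rule mm_srg[OF fin cV irr' sym']) (use main in \<open>simp add: K_def L_def Idm_def\<close>)
qed

end

lemma gm_switch_srg:
  assumes "strongly_regular V E n k l m" and "godsil_mckay_partition V E X Y"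
  shows "strongly_regular V (gm_switch V E X Y) n k l m"
proof -
  interpret gmp V E X Y
    using assms unfolding strongly_regular_def by unfold_locales auto
  show ?thesis by (rule switch_srg[OF assms(1)])
qed




context nsq
begin

lemma TS_sum:
  assumes G: "grp D" and TS: "\<And>d. d \<in> D \<Longrightarrow> Q d = 0"
  shows "(\<Sum>d\<in>D. (if rad d then CC else 0) + chi (Q d) * SS) = CC + real (card D) * SS"
proof -
  have z: "0 \<in> D" using G by (simp add: grp_def)
  have "(\<Sum>d\<in>D. (if rad d then CC else 0) + chi (Q d) * SS)
       = (\<Sum>d\<in>D. (if d = 0 then CC else 0) + SS)"
    by (rule sum.cong) (auto simp: TS chi_def rad0 dest: rad_sing)
  also have "\<dots> = CC + real (card D) * SS"
    using z by (simp add: sum.distrib)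
  finally show ?thesis .
qed

lemma A_facts:
  assumes qs: "quadric_subspace Q s A"
  shows "vec.subspace A" "grp A" "\<And>a. a \<in> A \<Longrightarrow> Q a = 0"
    "\<And>a b. a \<in> A \<Longrightarrow> b \<in> A \<Longrightarrow> B a b = 0" "card A = 2 ^ (s + 1)"
proof -
  show sA: "vec.subspace A" using qs by (simp add: quadric_subspace_def)
  show gA: "grp A" by (rule subspace_grp[OF sA])
  show qa: "\<And>a. a \<in> A \<Longrightarrow> Q a = 0"
    using qs Q00 unfolding quadric_subspace_def on_quadric_def by metis
  show "\<And>a b. a \<in> A \<Longrightarrow> b \<in> A \<Longrightarrow> B a b = 0"
  proof -
    fix a b assume a: "a \<in> A" and b: "b \<in> A"
    have "a + b \<in> A" using gA a b by (simp add: grp_def)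
    then show "B a b = 0" using Q_add[of Q a b] qa[OF a] qa[OF b] qa[of "a + b"] by simp
  qed
  show "card A = 2 ^ (s + 1)" using card_subspace[OF sA] qs by (simp add: quadric_subspace_def)
qed

lemma A_sub_Zset:
  assumes qs: "quadric_subspace Q s A" shows "A \<subseteq> Zset A"
  using A_facts[OF qs] by (auto simp: Zset_def)

lemma Xset_eq:
  assumes qs: "quadric_subspace Q s A"
  shows "Xset Q A = Zset A - A"
proof -
  note AF = A_facts[OF qs]
  have z: "0 \<in> A" using AF(2) by (simp add: grp_def)
  show ?thesis
  proof (intro set_eqI iffI)
    fix x assume x: "x \<in> Xset Q A"
    then have x0: "x \<noteq> 0" "Q x = 0" "x \<notin> A" and oq: "on_quadric Q (ext x A)"
      unfolding Xset_def qpoints_def using span_ext[OF AF(1)] by auto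
    have "\<forall>a\<in>A. B a x = 0"
    proof
      fix a assume a: "a \<in> A"
      have "x + a \<in> ext x A" using a by (simp add: ext_def)
      moreover have "x + a \<noteq> 0" using a x0(3) by (auto simp: vec_eq_add_iff)
      ultimately have "Q (x + a) = 0" using oq by (simp add: on_quadric_def)
      then have "B x a = 0" using Q_add[of Q x a] x0(2) AF(3)[OF a] by simp
      then show "B a x = 0" using polar_sym[OF qf, of a x] by simp
    qed
    then show "x \<in> Zset A - A" using x0 by (simp add: Zset_def)
  next
    fix x assume x: "x \<in> Zset A - A"
    then have qx: "Q x = 0" and bx: "\<forall>a\<in>A. B a x = 0" and xA: "x \<notin> A" by (auto simp: Zset_def)
    have x0: "x \<noteq> 0" using xA z by auto
    have "on_quadric Q (ext x A)"
      unfolding on_quadric_def ext_def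
    proof (intro ballI impI)
      fix v assume "v \<in> A \<union> (+) x ` A" "v \<noteq> 0"
      then consider "v \<in> A" | a where "a \<in> A" "v = x + a" by blast
      then show "Q v = 0"
      proof cases
        case 1 then show ?thesis by (rule AF(3))
      next
        case 2
        have "B x a = 0" using bx 2(1) polar_sym[OF qf, of a x] by simp
        then show ?thesis using 2 Q_add[of Q x a] qx AF(3)[OF 2(1)] by simp
      qed
    qed
    then show "x \<in> Xset Q A"
      unfolding Xset_def qpoints_def using span_ext[OF AF(1)] x0 qx xA by auto
  qed
qed

lemma Zset_ext:
  assumes z: "0 \<in> A"
  shows "Zset (ext x A) = {w \<in> Zset A. B x w = 0}"
proof (intro set_eqI iffI)
  fix w assume "w \<in> Zset (ext x A)"
  moreover have "x \<in> ext x A" using z unfolding ext_def by (metis UnI2 add_0_right image_eqI)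
  ultimately show "w \<in> {w \<in> Zset A. B x w = 0}" by (auto simp: Zset_def ext_def)
next
  fix w assume "w \<in> {w \<in> Zset A. B x w = 0}"
  then show "w \<in> Zset (ext x A)" by (auto simp: Zset_def ext_def polar_add1[OF qf])
qed

lemma A_MF:
  assumes qs: "quadric_subspace Q s A"
  shows "real (card A) * real (card (Zset A)) = (CC + real (card A) * SS) / 2"
  using A_facts[OF qs] by (intro MF_TS) auto

lemma X_nonempty:
  assumes qs: "quadric_subspace Q s A" and pi: "projective_index Q g" and sg: "s < g"
  shows "Xset Q A \<noteq> {}"
proof -
  obtain W where W: "quadric_subspace Q g W" using pi by (auto simp: projective_index_def)
  define a where "a = real (card A)"
  define w where "w = real (card W)"
  define za where "za = real (card (Zset A))"
  define zw where "zw = real (card (Zset W))"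
  have h1: "2 * a * za = CC + a * SS" using A_MF[OF qs] by (simp add: a_def za_def field_simps)
  have h2: "2 * w * zw = CC + w * SS" using A_MF[OF W] by (simp add: w_def zw_def field_simps)
  have zw: "zw \<ge> w" unfolding zw_def w_def by (simp add: card_mono A_sub_Zset[OF W])
  have "(2::nat) ^ (s + 1) < 2 ^ (g + 1)" using sg by (simp add: power_strict_increasing)
  then have wa: "w > a" unfolding w_def a_def using A_facts(5)[OF qs] A_facts(5)[OF W]
    by (metis of_nat_less_iff)
  have a1: "a > 0" unfolding a_def using A_facts(5)[OF qs] by simp
  have w0: "w > 0" using wa a1 by simp
  have e1: "w * (2 * a * za - 2 * a * a) = w * (CC + a * SS - 2 * a * a)" using h1 by simp
  have e2: "a * (2 * w * zw - 2 * w * w) = a * (CC + w * SS - 2 * w * w)" using h2 by simp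
  have e3: "w * (CC + a * SS - 2 * a * a) = (w - a) * CC + a * (CC + w * SS - 2 * w * w) + 2 * a * w * (w - a)"
    by (simp add: algebra_simps)
  have p1: "(w - a) * CC > 0" using wa CC_pos by simp
  have p2: "a * (2 * w * zw - 2 * w * w) \<ge> 0"
  proof -
    have "2 * w * zw - 2 * w * w = 2 * w * (zw - w)" by (simp add: algebra_simps)
    also have "\<dots> \<ge> 0" using w0 zw by simp
    finally show ?thesis using a1 by simp
  qed
  have p3: "2 * a * w * (w - a) > 0" using a1 w0 wa by simp
  have "w * (2 * a * za - 2 * a * a) > 0" using e1 e2 e3 p1 p2 p3 by linarith
  then have "2 * a * za - 2 * a * a > 0" using w0 by (simp add: zero_less_mult_iff)
  then have "2 * a * (za - a) > 0" by (simp add: algebra_simps)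
  then have "za > a" using a1 by (simp add: zero_less_mult_iff)
  then have "card (Zset A) > card A" unfolding za_def a_def by simp
  then have "\<not> Zset A \<subseteq> A" using card_mono[of A "Zset A"] by (meson card_mono finite leD)
  then show ?thesis using Xset_eq[OF qs] by auto
qed

end



context nsq
begin

lemma X_sub_P: "Xset Q A \<subseteq> qpoints Q" by (auto simp: Xset_def)

lemma X_regular:
  assumes qs: "quadric_subspace Q s A" and x: "x \<in> Xset Q A"
  shows "real (card (nbrs (Xset Q A) (qadj Q) x)) =
     (CC + 2 * real (card A) * SS) / (4 * real (card A)) - real (card A) - 1"
proof -
  note AF = A_facts[OF qs]
  have z: "0 \<in> A" using AF(2) by (simp add: grp_def)
  have xz: "x \<in> Zset A" "x \<notin> A" using x Xset_eq[OF qs] by auto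
  have qx: "Q x = 0" and bx: "\<forall>a\<in>A. B a x = 0" using xz by (auto simp: Zset_def)
  have xP: "x \<in> qpoints Q" using x X_sub_P by blast
  have N: "nbrs (Xset Q A) (qadj Q) x = Zset (ext x A) - (A \<union> {x})"
  proof (intro set_eqI iffI)
    fix w assume "w \<in> nbrs (Xset Q A) (qadj Q) x"
    then have w: "w \<in> Xset Q A" "qadj Q x w" by (auto simp: nbrs_def)
    then have "x \<noteq> w \<and> B x w = 0" using qadj_iff[OF xP] X_sub_P by blast
    then show "w \<in> Zset (ext x A) - (A \<union> {x})" using w(1) Xset_eq[OF qs] Zset_ext[OF z] by auto
  next
    fix w assume w: "w \<in> Zset (ext x A) - (A \<union> {x})"
    then have wX: "w \<in> Xset Q A" and bw: "B x w = 0" "x \<noteq> w"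
      using Xset_eq[OF qs] Zset_ext[OF z] by auto
    then have "qadj Q x w" using qadj_iff[OF xP] X_sub_P by blast
    then show "w \<in> nbrs (Xset Q A) (qadj Q) x" using wX by (simp add: nbrs_def)
  qed
  have sub: "A \<union> {x} \<subseteq> Zset (ext x A)"
    unfolding Zset_ext[OF z]
    using A_sub_Zset[OF qs] xz bx polar_sym[OF qf] polar_self[OF qf] by auto
  have cAx: "card (A \<union> {x}) = card A + 1" using xz(2) by simp
  have ce: "card (ext x A) = 2 * card A" by (rule card_ext[OF xz(2) AF(2)])
  have TS: "\<And>d. d \<in> ext x A \<Longrightarrow> Q d = 0"
  proof -
    fix d assume "d \<in> ext x A"
    then consider "d \<in> A" | a where "a \<in> A" "d = x + a" unfolding ext_def by blast
    then show "Q d = 0"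
    proof cases
      case 1 then show ?thesis by (rule AF(3))
    next
      case 2
      have "B x a = 0" using bx 2(1) polar_sym[OF qf, of a x] by simp
      then show ?thesis using 2 Q_add[of Q x a] qx AF(3)[OF 2(1)] by simp
    qed
  qed
  have "real (card (ext x A)) * real (card (Zset (ext x A))) = (CC + real (card (ext x A)) * SS) / 2"
    by (rule MF_TS[OF grp_ext[OF AF(2)] TS])
  then have M: "2 * real (card A) * real (card (Zset (ext x A))) = (CC + 2 * real (card A) * SS) / 2"
    using ce by simp
  have a1: "real (card A) > 0" using AF(5) by simp
  have Z: "real (card (Zset (ext x A))) = (CC + 2 * real (card A) * SS) / (4 * real (card A))"
  proof -
    have "real (card (Zset (ext x A))) * (4 * real (card A)) = CC + 2 * real (card A) * SS" using M by (simp add: algebra_simps)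
    moreover have nz: "4 * real (card A) \<noteq> 0" using a1 by linarith
    ultimately show ?thesis by (metis nonzero_mult_div_cancel_right)
  qed
  show ?thesis unfolding N using card_diff_real[OF sub] cAx Z by simp
qed

lemma Y_cond:
  assumes qs: "quadric_subspace Q s A" and y: "y \<in> Yset Q A"
  shows "card (nbrs (Xset Q A) (qadj Q) y) = card (Xset Q A) \<or>
         2 * card (nbrs (Xset Q A) (qadj Q) y) = card (Xset Q A)"
proof -
  note AF = A_facts[OF qs]
  have z: "0 \<in> A" using AF(2) by (simp add: grp_def)
  have yP: "y \<in> qpoints Q" and yX: "y \<notin> Xset Q A" using y by (auto simp: Yset_def)
  have qy: "Q y = 0" using yP by (simp add: qpoints_def)
  show ?thesis
  proof (cases "y \<in> A")
    case True
    have "nbrs (Xset Q A) (qadj Q) y = Xset Q A"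
    proof (intro set_eqI iffI)
      fix w assume "w \<in> nbrs (Xset Q A) (qadj Q) y" then show "w \<in> Xset Q A" by (simp add: nbrs_def)
    next
      fix w assume w: "w \<in> Xset Q A"
      then have "w \<in> Zset A" "w \<notin> A" using Xset_eq[OF qs] by auto
      then have "y \<noteq> w \<and> B y w = 0" using True by (auto simp: Zset_def)
      then have "qadj Q y w" using qadj_iff[OF yP] w X_sub_P by blast
      then show "w \<in> nbrs (Xset Q A) (qadj Q) y" using w by (simp add: nbrs_def)
    qed
    then show ?thesis by simp
  next
    case False
    have "y \<notin> Zset A" using yX False Xset_eq[OF qs] by auto
    then obtain a0 where a0: "a0 \<in> A" "B a0 y \<noteq> 0" using qy by (auto simp: Zset_def)
    have ya0: "B y a0 = 1" using a0 polar_sym[OF qf, of a0 y] by simp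
    define Ay where "Ay = {a \<in> A. B y a = 0}"
    have N: "nbrs (Xset Q A) (qadj Q) y = Zset (ext y A) - Ay"
    proof (intro set_eqI iffI)
      fix w assume "w \<in> nbrs (Xset Q A) (qadj Q) y"
      then have w: "w \<in> Xset Q A" "qadj Q y w" by (auto simp: nbrs_def)
      then have "y \<noteq> w \<and> B y w = 0" using qadj_iff[OF yP] X_sub_P by blast
      then show "w \<in> Zset (ext y A) - Ay" using w(1) Xset_eq[OF qs] Zset_ext[OF z] by (auto simp: Ay_def)
    next
      fix w assume w: "w \<in> Zset (ext y A) - Ay"
      then have wX: "w \<in> Xset Q A" and bw: "B y w = 0"
        using Xset_eq[OF qs] Zset_ext[OF z] by (auto simp: Ay_def)
      have "y \<noteq> w" using wX \<open>y \<notin> Xset Q A\<close> by auto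
      then have "qadj Q y w" using qadj_iff[OF yP] X_sub_P wX bw by blast
      then show "w \<in> nbrs (Xset Q A) (qadj Q) y" using wX by (simp add: nbrs_def)
    qed
    have sub: "Ay \<subseteq> Zset (ext y A)"
      unfolding Zset_ext[OF z] Ay_def using A_sub_Zset[OF qs] by auto
    have chisum: "(\<Sum>a\<in>A. chi (B y a)) = 0"
      using char_sum_grp[OF AF(2), of "B y"] polar_add2[OF qf] a0(1) ya0 by auto
    have "(\<Sum>a\<in>A. chi (B y a)) = (\<Sum>a\<in>A. 2 * (if a \<in> Ay then 1 else 0) - 1)"
      by (rule sum.cong) (auto simp: chi_def Ay_def)
    also have "\<dots> = 2 * (\<Sum>a\<in>A. (if a \<in> Ay then 1 else 0)) - real (card A)"
      by (simp add: sum_subtractf sum_distrib_left)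
    also have "(\<Sum>a\<in>A. (if a \<in> Ay then 1 else 0)) = real (card (A \<inter> Ay))"
      using sum_const_indicator[of A Ay 1] by simp
    also have "A \<inter> Ay = Ay" by (auto simp: Ay_def)
    finally have cAy: "2 * real (card Ay) = real (card A)" using chisum by simp
    have s2: "(\<Sum>a\<in>A. (if rad (y + a) then CC else 0) + chi (Q (y + a)) * SS) = 0"
    proof -
      have "(\<Sum>a\<in>A. (if rad (y + a) then CC else 0) + chi (Q (y + a)) * SS) = (\<Sum>a\<in>A. chi (B y a) * SS)"
      proof (rule sum.cong)
        fix a assume a: "a \<in> A"
        have nr: "\<not> rad (y + a)"
        proof
          assume "rad (y + a)"
          then have "B (y + a) a0 = 0" by (simp add: rad_def)
          then show False using polar_add1[OF qf, of y a a0] ya0 AF(4)[OF a a0(1)] by simp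
        qed
        have "Q (y + a) = B y a" using Q_add[of Q y a] qy AF(3)[OF a] by simp
        then show "(if rad (y + a) then CC else 0) + chi (Q (y + a)) * SS = chi (B y a) * SS"
          using nr by simp
      qed simp
      also have "\<dots> = 0" using chisum by (simp add: sum_distrib_right[symmetric])
      finally show ?thesis .
    qed
    have "real (card (ext y A)) * real (card (Zset (ext y A)))
       = (\<Sum>d\<in>ext y A. (if rad d then CC else 0) + chi (Q d) * SS) / 2"
      by (rule MF[OF grp_ext[OF AF(2)]])
    also have "(\<Sum>d\<in>ext y A. (if rad d then CC else 0) + chi (Q d) * SS)
       = (\<Sum>a\<in>A. (if rad a then CC else 0) + chi (Q a) * SS) + (\<Sum>a\<in>A. (if rad (y + a) then CC else 0) + chi (Q (y + a)) * SS)"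
      by (rule sum_ext[OF False AF(2)])
    also have "(\<Sum>a\<in>A. (if rad a then CC else 0) + chi (Q a) * SS) = CC + real (card A) * SS"
      by (rule TS_sum[OF AF(2) AF(3)])
    finally have "real (card (ext y A)) * real (card (Zset (ext y A))) = (CC + real (card A) * SS) / 2"
      using s2 by simp
    then have E1: "4 * (real (card A) * real (card (Zset (ext y A)))) = CC + real (card A) * SS"
      using card_ext[OF False AF(2)] by (simp add: algebra_simps)
    have E2: "real (card A) * real (card (Zset A)) * 2 = CC + real (card A) * SS"
      using A_MF[OF qs] by simp
    have "real (card A) * (2 * real (card (Zset (ext y A))) - real (card (Zset A)))
        = (4 * (real (card A) * real (card (Zset (ext y A)))) - real (card A) * real (card (Zset A)) * 2) / 2"
      by (simp add: algebra_simps)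
    also have "\<dots> = 0" using E1 E2 by simp
    finally have "real (card A) * (2 * real (card (Zset (ext y A))) - real (card (Zset A))) = 0" .
    then have ZZ: "2 * real (card (Zset (ext y A))) = real (card (Zset A))"
      using AF(5) by simp
    have cX: "real (card (Xset Q A)) = real (card (Zset A)) - real (card A)"
      unfolding Xset_eq[OF qs] by (rule card_diff_real[OF A_sub_Zset[OF qs]]) simp
    have "real (2 * card (nbrs (Xset Q A) (qadj Q) y)) = 2 * (real (card (Zset (ext y A))) - real (card Ay))"
      unfolding N using card_diff_real[OF sub] by simp
    also have "\<dots> = real (card (Xset Q A))" using ZZ cAy cX by simp
    finally have "2 * card (nbrs (Xset Q A) (qadj Q) y) = card (Xset Q A)" by (simp only: of_nat_eq_iff)
    then show ?thesis by blast
  qed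
qed

lemma gm_part:
  assumes qs: "quadric_subspace Q s A" and pi: "projective_index Q g" and sg: "s < g"
  shows "godsil_mckay_partition (qpoints Q) (qadj Q) (Xset Q A) (Yset Q A)"
proof -
  note AF = A_facts[OF qs]
  have "vec.dim A = s + 1" using qs by (simp add: quadric_subspace_def)
  then have "\<not> A \<subseteq> {0}" using vec.dim_eq_0[of A] by simp
  then obtain a where a: "a \<in> A" "a \<noteq> 0" by blast
  have "a \<in> qpoints Q" using a AF(3) by (simp add: qpoints_def)
  moreover have "a \<notin> Xset Q A" using a Xset_eq[OF qs] by auto
  ultimately have Yne: "Yset Q A \<noteq> {}" by (auto simp: Yset_def)
  have reg: "\<exists>k. \<forall>x\<in>Xset Q A. card (nbrs (Xset Q A) (qadj Q) x) = k"
    by (rule ex_const) (rule X_regular[OF qs])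
  show ?thesis unfolding godsil_mckay_partition_def
    using X_nonempty[OF qs pi sg] Yne X_sub_P reg Y_cond[OF qs] by (auto simp: Yset_def)
qed

end

theorem theorem3p3:
  fixes Q :: "bit^'n \<Rightarrow> bit" and A :: "(bit^'n) set" and g s :: nat
  assumes "nonsingular_quadric Q"
    and "projective_index Q g" and "g \<ge> 1"
    and "s < g"
    and "quadric_subspace Q s A"
  shows "godsil_mckay_partition (qpoints Q) (qadj Q) (Xset Q A) (Yset Q A) \<and>
         (\<exists>v k l m. strongly_regular (qpoints Q) (qadj Q) v k l m \<and>
            strongly_regular (qpoints Q)
              (gm_switch (qpoints Q) (qadj Q) (Xset Q A) (Yset Q A)) v k l m)"
proof -
  interpret nsq Q by unfold_locales (rule assms(1))
  have gp: "godsil_mckay_partition (qpoints Q) (qadj Q) (Xset Q A) (Yset Q A)"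
    by (rule gm_part[OF assms(5,2,4)])
  obtain k l m where srg: "strongly_regular (qpoints Q) (qadj Q) (card (qpoints Q)) k l m"
    using srg_gamma by blast
  show ?thesis using gp srg gm_switch_srg[OF srg gp] by blast
qed


end
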